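(* Let $k\geq 1$ and $n\geq 2$ be integers, let $\Omega>0$, $0<\sigma\leq m_{\min}$, and set \[ \tau=\frac{e^{-1}}{\Omega}\Big(\frac{\sigma}{m_{\min}}\Big)^{\frac{1}{2n-1}}. \] Then there exist a positive discrete measure $\mu=\sum_{j=1}^{n}a_j \delta_{\mathbf y_j}$ on $\mathbb R^k$ (all $a_j>0$) whose $n$ supports are the points $\big(-(n-\tfrac12)\tau+2m\tau,0,\dots,0\big)\in\mathbb R^k$, $m=0,1,\dots,n-1$, and a positive discrete measure $\hat \mu=\sum_{j=1}^{n}\hat a_j \delta_{\hat{\mathbf y}_j}$ on $\mathbb R^k$ (all $\hat a_j>0$) whose $n$ supports are the points $\big(-(n-\tfrac32)\tau+2m\tau,0,\dots,0\big)\in\mathbb R^k$, $m=0,1,\dots,n-1$, such that \[ \max_{\boldsymbol\omega\in\mathbb R^k,\ \|\boldsymbol\omega\|_2\leq\Omega}\big|\mathcal F[\hat \mu](\boldsymbol\omega)- \mathcal F[\mu](\boldsymbol\omega)\big|< \sigma, \qquad \min_{1\leq j\leq n}|a_j|= m_{\min}. \]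
   Context: For a discrete measure $\nu=\sum_{j} c_j\delta_{\mathbf x_j}$ on $\mathbb R^k$, its Fourier transform is $\mathcal F[\nu](\boldsymbol\omega)=\sum_j c_j e^{i \mathbf x_j\cdot\boldsymbol\omega}$, $\boldsymbol\omega\in\mathbb R^k$. Here $\Omega>0$ is the cutoff frequency, $\sigma>0$ the noise level and $m_{\min}>0$ a prescribed minimal amplitude. *)

theory Defs
  imports Complex_Main
begin

(* Vectors in R^k are represented as functions nat => real, only coordinates 0..k-1 matter. *)

definition dotk :: "nat \<Rightarrow> (nat \<Rightarrow> real) \<Rightarrow> (nat \<Rightarrow> real) \<Rightarrow> real" where
  "dotk k x w = (\<Sum>i<k. x i * w i)"

definition norm2k :: "nat \<Rightarrow> (nat \<Rightarrow> real) \<Rightarrow> real" where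
  "norm2k k w = sqrt (\<Sum>i<k. (w i)^2)"

definition fourier_disc :: "nat \<Rightarrow> nat \<Rightarrow> (nat \<Rightarrow> real) \<Rightarrow> (nat \<Rightarrow> nat \<Rightarrow> real)
    \<Rightarrow> (nat \<Rightarrow> real) \<Rightarrow> complex" where
  "fourier_disc k n c x w = (\<Sum>j<n. complex_of_real (c j) * exp (\<i> * complex_of_real (dotk k (x j) w)))"

definition tau34 :: "nat \<Rightarrow> real \<Rightarrow> real \<Rightarrow> real \<Rightarrow> real" where
  "tau34 n \<Omega> \<sigma> mmin = exp (-1) / \<Omega> * (\<sigma> / mmin) powr (1 / (2 * real n - 1))"

definition first_axis :: "real \<Rightarrow> nat \<Rightarrow> real" where
  "first_axis t = (\<lambda>i. if i = 0 then t else 0)"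

end

theory Submission
  imports Defs
begin


lemma cmod_1_exp: "cmod (1 - exp (\<i> * complex_of_real t)) \<le> \<bar>t\<bar>"
proof -
  have e: "exp (\<i> * complex_of_real t) = Complex (cos t) (sin t)"
    by (simp add: exp_eq_polar cis.ctr)
  have "(cmod (1 - exp (\<i> * complex_of_real t)))^2 = (1 - cos t)^2 + (sin t)^2"
    by (simp add: e cmod_def)
  also have "\<dots> = 2 - 2 * cos t" by (simp add: power2_eq_square algebra_simps sin_squared_eq)
  also have "\<dots> = 4 * (sin (t/2))^2"
    using cos_double_sin[of "t/2"] by simp
  also have "\<dots> \<le> t^2"
  proof -
    have "\<bar>sin (t/2)\<bar> \<le> \<bar>t/2\<bar>" by (rule abs_sin_x_le_abs_x)
    hence "(sin (t/2))^2 \<le> (t/2)^2" by (metis abs_le_square_iff)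
    thus ?thesis by (simp add: power_divide)
  qed
  finally show ?thesis by (metis abs_le_square_iff abs_norm_cancel)
qed

lemma sum_split2: "(\<Sum>l<2*n. f l) = (\<Sum>m<n. f (2*m) + f (2*m+1::nat))"
  by (induction n) (auto simp: algebra_simps)

theorem theorem3p4:
  fixes k n :: nat and \<Omega> \<sigma> mmin :: real
  assumes "k \<ge> 1" and "n \<ge> 2" and "\<Omega> > 0" and "0 < \<sigma>" and "\<sigma> \<le> mmin"
  shows "\<exists>a ahat :: nat \<Rightarrow> real.
    (\<forall>j<n. a j > 0) \<and> (\<forall>j<n. ahat j > 0) \<and>
    (\<forall>w :: nat \<Rightarrow> real. norm2k k w \<le> \<Omega> \<longrightarrow>
       cmod (fourier_disc k n ahat
               (\<lambda>m. first_axis (- (real n - 3/2) * tau34 n \<Omega> \<sigma> mmin + 2 * real m * tau34 n \<Omega> \<sigma> mmin)) w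
           - fourier_disc k n a
               (\<lambda>m. first_axis (- (real n - 1/2) * tau34 n \<Omega> \<sigma> mmin + 2 * real m * tau34 n \<Omega> \<sigma> mmin)) w)
       < \<sigma>) \<and>
    Min ((\<lambda>j. \<bar>a j\<bar>) ` {..<n}) = mmin"
proof -
  define \<tau> where "\<tau> = tau34 n \<Omega> \<sigma> mmin"
  define N where "N = 2*n - 1"
  define T0 where "T0 = - (real n - 1/2) * \<tau>"
  define a where "a = (\<lambda>j. mmin * real (N choose (2*j)))"
  define ahat where "ahat = (\<lambda>j. mmin * real (N choose (2*j+1)))"
  have mpos: "mmin > 0" using assms by linarith
  have N1: "N \<ge> 1" and N2: "Suc N = 2*n" using assms by (auto simp: N_def)
  have tpos: "\<tau> > 0" using assms mpos by (simp add: \<tau>_def tau34_def)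
  have dot: "dotk k (first_axis t) w = t * w 0" for t w
  proof -
    have "dotk k (first_axis t) w = (\<Sum>i<k. if i = 0 then t * w 0 else 0)"
      unfolding dotk_def first_axis_def by (rule sum.cong) auto
    also have "\<dots> = t * w 0" using assms(1) by (simp add: sum.delta)
    finally show ?thesis .
  qed
  have tO: "(\<tau> * \<Omega>) ^ N = exp (-1) ^ N * (\<sigma> / mmin)"
  proof -
    have r: "\<sigma> / mmin > 0" using assms mpos by simp
    have "\<tau> * \<Omega> = exp (-1) * (\<sigma> / mmin) powr (1 / real N)"
      using assms N1 by (simp add: \<tau>_def tau34_def N_def of_nat_diff)
    moreover have "((\<sigma> / mmin) powr (1 / real N)) ^ N = \<sigma> / mmin"
    proof -
      have "((\<sigma> / mmin) powr (1 / real N)) ^ N = ((\<sigma> / mmin) powr (1 / real N)) powr real N"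
        using r by (metis powr_gt_zero powr_realpow less_irrefl)
      also have "\<dots> = \<sigma> / mmin" using r N1 assms mpos by (simp add: powr_powr)
      finally show ?thesis .
    qed
    ultimately show ?thesis by (simp add: power_mult_distrib)
  qed
  have main: "cmod (fourier_disc k n ahat
               (\<lambda>m. first_axis (- (real n - 3/2) * \<tau> + 2 * real m * \<tau>)) w
           - fourier_disc k n a
               (\<lambda>m. first_axis (- (real n - 1/2) * \<tau> + 2 * real m * \<tau>)) w) < \<sigma>"
    if hw: "norm2k k w \<le> \<Omega>" for w
  proof -
    define \<theta> where "\<theta> = \<tau> * w 0"
    define z where "z = exp (\<i> * complex_of_real \<theta>)"
    define E where "E = exp (\<i> * complex_of_real (T0 * w 0))"
    have ex1: "exp (\<i> * complex_of_real ((- (real n - 1/2) * \<tau> + 2 * real m * \<tau>) * w 0)) = E * z ^ (2*m)" for m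
    proof -
      have "\<i> * complex_of_real ((- (real n - 1/2) * \<tau> + 2 * real m * \<tau>) * w 0)
          = \<i> * complex_of_real (T0 * w 0) + of_nat (2*m) * (\<i> * complex_of_real \<theta>)"
        by (simp add: T0_def \<theta>_def algebra_simps)
      hence "exp (\<i> * complex_of_real ((- (real n - 1/2) * \<tau> + 2 * real m * \<tau>) * w 0)) = exp (\<i> * complex_of_real (T0 * w 0)) * exp (of_nat (2*m) * (\<i> * complex_of_real \<theta>))"
        by (simp only: exp_add)
      thus ?thesis by (simp only: exp_of_nat_mult E_def z_def)
    qed
    have ex2: "exp (\<i> * complex_of_real ((- (real n - 3/2) * \<tau> + 2 * real m * \<tau>) * w 0)) = E * z ^ (2*m+1)" for m
    proof -
      have "\<i> * complex_of_real ((- (real n - 3/2) * \<tau> + 2 * real m * \<tau>) * w 0)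
          = \<i> * complex_of_real (T0 * w 0) + of_nat (2*m+1) * (\<i> * complex_of_real \<theta>)"
        by (simp add: T0_def \<theta>_def algebra_simps)
      hence "exp (\<i> * complex_of_real ((- (real n - 3/2) * \<tau> + 2 * real m * \<tau>) * w 0)) = exp (\<i> * complex_of_real (T0 * w 0)) * exp (of_nat (2*m+1) * (\<i> * complex_of_real \<theta>))"
        by (simp only: exp_add)
      thus ?thesis by (simp only: exp_of_nat_mult E_def z_def)
    qed
    let ?f = "\<lambda>l. of_nat (N choose l) * (- z) ^ l * 1 ^ (N - l)"
    have "fourier_disc k n ahat (\<lambda>m. first_axis (- (real n - 3/2) * \<tau> + 2 * real m * \<tau>)) w
           - fourier_disc k n a (\<lambda>m. first_axis (- (real n - 1/2) * \<tau> + 2 * real m * \<tau>)) w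
        = - complex_of_real mmin * E * (\<Sum>m<n. ?f (2*m) + ?f (2*m+1))"
      unfolding fourier_disc_def dot ex1 ex2 sum_subtractf[symmetric] sum_distrib_left
    proof (rule sum.cong[OF refl])
      fix m
      have p1: "(- z) ^ (2*m) = z ^ (2*m)" by (simp add: power_minus')
      have p2: "(- z) ^ (2*m+1) = - (z ^ (2*m+1))" by (simp add: power_minus')
      show "complex_of_real (ahat m) * (E * z ^ (2 * m + 1)) - complex_of_real (a m) * (E * z ^ (2 * m)) =
         - complex_of_real mmin * E * (?f (2*m) + ?f (2*m+1))"
        unfolding p1 p2 by (simp add: a_def ahat_def algebra_simps)
    qed
    also have "(\<Sum>m<n. ?f (2*m) + ?f (2*m+1)) = (\<Sum>l<2*n. ?f l)"
      by (rule sum_split2[symmetric])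
    also have "\<dots> = (\<Sum>l\<le>N. ?f l)"
      using N2 by (metis lessThan_Suc_atMost)
    also have "\<dots> = (- z + 1) ^ N" by (rule binomial_ring[symmetric])
    finally have eq: "fourier_disc k n ahat (\<lambda>m. first_axis (- (real n - 3/2) * \<tau> + 2 * real m * \<tau>)) w
           - fourier_disc k n a (\<lambda>m. first_axis (- (real n - 1/2) * \<tau> + 2 * real m * \<tau>)) w
        = - complex_of_real mmin * E * (1 - z) ^ N" by simp
    have w0: "\<bar>w 0\<bar> \<le> \<Omega>"
    proof -
      have "(w 0)^2 \<le> (\<Sum>i<k. (w i)^2)"
        using assms(1) by (intro member_le_sum) auto
      hence "sqrt ((w 0)^2) \<le> norm2k k w" unfolding norm2k_def by (rule real_sqrt_le_mono)
      thus ?thesis using hw by simp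
    qed
    have th: "\<bar>\<theta>\<bar> \<le> \<tau> * \<Omega>" using w0 tpos by (simp add: \<theta>_def abs_mult)
    have E1: "cmod E = 1" by (simp add: E_def)
    have "cmod (- complex_of_real mmin * E * (1 - z) ^ N) = mmin * cmod (1 - z) ^ N"
      using mpos by (simp add: norm_mult norm_power E1)
    also have "\<dots> \<le> mmin * (\<tau> * \<Omega>) ^ N"
      using cmod_1_exp[of \<theta>] th mpos unfolding z_def
      by (intro mult_left_mono power_mono) auto
    also have "\<dots> = exp (-1) ^ N * \<sigma>" using tO mpos by simp
    also have "\<dots> < \<sigma>"
    proof -
      have "exp (-1::real) < 1" by simp
      hence "exp (-1::real) ^ N < 1" using N1 by (simp add: power_less_one_iff)
      thus ?thesis using assms by simp
    qed
    finally show ?thesis using eq by simp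
  qed
  have amin: "Min ((\<lambda>j. \<bar>a j\<bar>) ` {..<n}) = mmin"
  proof (rule Min_eqI)
    show "finite ((\<lambda>j. \<bar>a j\<bar>) ` {..<n})" by simp
    show "y \<ge> mmin" if hy: "y \<in> (\<lambda>j. \<bar>a j\<bar>) ` {..<n}" for y
    proof -
      obtain j where j: "j < n" "y = \<bar>a j\<bar>" using hy by auto
      have "2*j \<le> N" using j N2 by simp
      hence "N choose (2*j) \<ge> 1" by (simp add: Suc_leI)
      hence "real (N choose (2*j)) \<ge> 1" by simp
      thus ?thesis using j mpos by (simp add: a_def)
    qed
    show "mmin \<in> (\<lambda>j. \<bar>a j\<bar>) ` {..<n}"
      using mpos assms(2) by (intro image_eqI[of _ _ 0]) (auto simp: a_def)
  qed
  have apos: "\<forall>j<n. a j > 0"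
  proof (intro allI impI)
    fix j assume "j < n"
    hence "2*j \<le> N" using N2 by simp
    thus "a j > 0" using mpos by (simp add: a_def)
  qed
  have ahpos: "\<forall>j<n. ahat j > 0"
  proof (intro allI impI)
    fix j assume "j < n"
    hence "2*j+1 \<le> N" using N2 by simp
    thus "ahat j > 0" using mpos by (simp add: ahat_def)
  qed
  show ?thesis
    using apos ahpos main amin unfolding \<tau>_def by blast
qed

end
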